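(* If $v$ is a leaf of a tree $T$ with at least four vertices, then fewer than half of the subtrees of $T$ contain $v$.
   Context: A leaf is a vertex of degree at most 1. A subtree of $T$ is a nonempty set of vertices of $T$ inducing a connected subgraph. *)

theory Defs
  imports Main
begin

definition graph :: "'a set \<Rightarrow> 'a set set \<Rightarrow> bool" where
  "graph V E \<longleftrightarrow> finite V \<and> (\<forall>e\<in>E. e \<subseteq> V \<and> card e = 2)"

definition adj :: "'a set set \<Rightarrow> 'a \<Rightarrow> 'a \<Rightarrow> bool" where
  "adj E u v \<longleftrightarrow> {u, v} \<in> E"

definition degree :: "'a set set \<Rightarrow> 'a \<Rightarrow> nat" where
  "degree E v = card {e\<in>E. v \<in> e}"

definition walk_in :: "'a set set \<Rightarrow> 'a set \<Rightarrow> 'a list \<Rightarrow> bool" where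
  "walk_in E S p \<longleftrightarrow> p \<noteq> [] \<and> set p \<subseteq> S \<and>
     (\<forall>i. Suc i < length p \<longrightarrow> adj E (p ! i) (p ! Suc i))"

text \<open>S induces a connected subgraph (the empty set counts as connected here;
  nonemptiness is required separately for subtrees).\<close>
definition connected_set :: "'a set set \<Rightarrow> 'a set \<Rightarrow> bool" where
  "connected_set E S \<longleftrightarrow> (\<forall>u\<in>S. \<forall>v\<in>S. \<exists>p. walk_in E S p \<and> hd p = u \<and> last p = v)"

definition is_cycle :: "'a set set \<Rightarrow> 'a list \<Rightarrow> bool" where
  "is_cycle E c \<longleftrightarrow> length c \<ge> 3 \<and> distinct c \<and>
     (\<forall>i. Suc i < length c \<longrightarrow> adj E (c ! i) (c ! Suc i)) \<and> adj E (last c) (hd c)"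

definition tree :: "'a set \<Rightarrow> 'a set set \<Rightarrow> bool" where
  "tree V E \<longleftrightarrow> graph V E \<and> V \<noteq> {} \<and> connected_set E V \<and> \<not> (\<exists>c. set c \<subseteq> V \<and> is_cycle E c)"

definition leaf :: "'a set \<Rightarrow> 'a set set \<Rightarrow> 'a \<Rightarrow> bool" where
  "leaf V E v \<longleftrightarrow> v \<in> V \<and> degree E v \<le> 1"

definition subtrees :: "'a set \<Rightarrow> 'a set set \<Rightarrow> 'a set set" where
  "subtrees V E = {S. S \<subseteq> V \<and> S \<noteq> {} \<and> connected_set E S}"

end

theory Submission
  imports Defs
begin

lemma walk_single: "walk_in E S [x] \<longleftrightarrow> x \<in> S"
  by (simp add: walk_in_def)

lemma walk_cons2: "walk_in E S (x#y#p) \<longleftrightarrow> x \<in> S \<and> adj E x y \<and> walk_in E S (y#p)"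
proof
  assume h: "walk_in E S (x#y#p)"
  have "adj E x y" using h unfolding walk_in_def by (metis One_nat_def length_Cons lessI nth_Cons_0 nth_Cons_Suc zero_less_Suc less_trans_Suc) 
  moreover have "\<forall>i. Suc i < length (y#p) \<longrightarrow> adj E ((y#p)!i) ((y#p)!Suc i)"
  proof (intro allI impI)
    fix i assume "Suc i < length (y#p)"
    then have "Suc (Suc i) < length (x#y#p)" by simp
    then show "adj E ((y#p)!i) ((y#p)!Suc i)" using h unfolding walk_in_def by fastforce
  qed
  ultimately show "x \<in> S \<and> adj E x y \<and> walk_in E S (y#p)" using h unfolding walk_in_def by auto
next
  assume h: "x \<in> S \<and> adj E x y \<and> walk_in E S (y#p)"
  have "\<forall>i. Suc i < length (x#y#p) \<longrightarrow> adj E ((x#y#p)!i) ((x#y#p)!Suc i)"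
  proof (intro allI impI)
    fix i assume a: "Suc i < length (x#y#p)"
    show "adj E ((x#y#p)!i) ((x#y#p)!Suc i)"
    proof (cases i)
      case 0 then show ?thesis using h by simp
    next
      case (Suc j)
      then have "Suc j < length (y#p)" using a by simp
      then show ?thesis using h Suc unfolding walk_in_def by fastforce
    qed
  qed
  then show "walk_in E S (x#y#p)" using h unfolding walk_in_def by auto
qed

lemma walk_remove:
  assumes uniq: "\<And>y z. adj E v y \<Longrightarrow> adj E v z \<Longrightarrow> y = z"
    and sym: "\<And>a b. adj E a b \<Longrightarrow> adj E b a"
  shows "walk_in E S p \<Longrightarrow> hd p \<noteq> v \<Longrightarrow> last p \<noteq> v \<Longrightarrow>
     \<exists>q. walk_in E (S - {v}) q \<and> hd q = hd p \<and> last q = last p"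
proof (induction "length p" arbitrary: p rule: less_induct)
  case less
  show ?case
  proof (cases p)
    case Nil then show ?thesis using less.prems walk_in_def by auto
  next
    case (Cons x r)
    show ?thesis
    proof (cases r)
      case Nil
      then show ?thesis using less.prems Cons by (intro exI[of _ "[x]"]) (auto simp: walk_single)
    next
      case (Cons y r')
      note p = \<open>p = x # r\<close>
      have w: "x \<in> S" "adj E x y" "walk_in E S (y#r')" using less.prems(1) unfolding p Cons walk_cons2 by auto
      show ?thesis
      proof (cases "y = v")
        case False
        obtain q where q: "walk_in E (S - {v}) q" "hd q = y" "last q = last (y#r')"
          using less.hyps[of "y#r'"] p Cons w less.prems False by auto
        then obtain q' where q': "q = y # q'" using walk_in_def by (cases q) auto
        have "walk_in E (S - {v}) (x#q)" using q q' w less.prems p by (auto simp: walk_cons2)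
        then show ?thesis using q q' p Cons by (intro exI[of _ "x#q"]) auto
      next
        case True
        then obtain z r'' where r': "r' = z # r''" using less.prems p Cons by (cases r') auto
        have "adj E v z" using w r' True by (simp add: walk_cons2)
        moreover have "adj E v x" using w True sym by simp
        ultimately have zx: "z = x" using uniq by blast
        have wz: "walk_in E S (z#r'')" using w r' by (simp add: walk_cons2)
        show ?thesis using less.hyps[of "z#r''"] wz zx p Cons r' less.prems by auto
      qed
    qed
  qed
qed

theorem mainTheorem5:
  assumes "tree V E" and "card V \<ge> 4" and "leaf V E v"
  shows "2 * card {S \<in> subtrees V E. v \<in> S} < card (subtrees V E)"
proof -
  have fV: "finite V" and gE: "\<forall>e\<in>E. e \<subseteq> V \<and> card e = 2"
    using assms(1) unfolding tree_def graph_def by auto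
  have conV: "connected_set E V" using assms(1) unfolding tree_def by auto
  have vV: "v \<in> V" and dv: "degree E v \<le> 1" using assms(3) unfolding leaf_def by auto
  have fE: "finite E" using gE fV by (meson Pow_iff finite_Pow_iff finite_subset subsetI)
  have sym: "\<And>a b. adj E a b \<Longrightarrow> adj E b a" unfolding adj_def by (simp add: insert_commute)
  have neqv: "\<And>y. adj E v y \<Longrightarrow> y \<noteq> v" using gE unfolding adj_def by fastforce
  have adjV: "\<And>y. adj E v y \<Longrightarrow> y \<in> V" using gE unfolding adj_def by blast
  have uniq: "\<And>y z. adj E v y \<Longrightarrow> adj E v z \<Longrightarrow> y = z"
  proof -
    fix y z assume a: "adj E v y" "adj E v z"
    have fin: "finite {e\<in>E. v \<in> e}" using fE by simp
    have "{v,y} \<in> {e\<in>E. v \<in> e}" "{v,z} \<in> {e\<in>E. v \<in> e}" using a unfolding adj_def by auto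
    then have "{v,y} = {v,z}" using dv fin unfolding degree_def by (metis card_le_Suc0_iff_eq One_nat_def)
    then show "y = z" using neqv[OF a(1)] by (metis doubleton_eq_iff)
  qed
  \<comment> \<open>second vertex of a walk from v is a neighbour\<close>
  have nb: "\<And>S x. connected_set E S \<Longrightarrow> v \<in> S \<Longrightarrow> x \<in> S \<Longrightarrow> x \<noteq> v \<Longrightarrow> \<exists>y\<in>S. adj E v y"
  proof -
    fix S x assume a: "connected_set E S" "v \<in> S" "x \<in> S" "x \<noteq> v"
    then obtain p where p: "walk_in E S p" "hd p = v" "last p = x" unfolding connected_set_def by blast
    then obtain r where r: "p = v # r" using walk_in_def by (cases p) auto
    then obtain y r' where yr: "r = y # r'" using p a by (cases r) auto
    then have "walk_in E S (v # y # r')" using p r by simp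
    then have "y \<in> S \<and> adj E v y" unfolding walk_cons2 by (auto simp: walk_in_def)
    then show "\<exists>y\<in>S. adj E v y" by blast
  qed
  have "card V \<ge> 2" using assms(2) by simp
  then obtain x where x: "x \<in> V" "x \<noteq> v" using vV
    by (metis card_le_Suc0_iff_eq fV not_less_eq_eq numeral_2_eq_2)
  obtain u where u: "u \<in> V" "adj E v u" using nb[OF conV vV x] by blast
  have "card (V - {u, v}) \<ge> 2"
  proof -
    have "card (V - {u,v}) = card V - card {u,v}" using u vV fV by (simp add: card_Diff_subset)
    moreover have "card {u,v} \<le> 2" by (simp add: card_insert_le_m1)
    ultimately show ?thesis using assms(2) by linarith
  qed
  then obtain w w' where ww: "w \<in> V - {u,v}" "w' \<in> V - {u,v}" "w \<noteq> w'"
    by (metis card_le_Suc0_iff_eq finite_Diff fV not_less_eq_eq numeral_2_eq_2)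
  have single: "\<And>a. a \<in> V \<Longrightarrow> {a} \<in> subtrees V E"
    unfolding subtrees_def connected_set_def
    by (auto intro!: exI[of _ "[_]"] simp: walk_single)
  define A where "A = {S \<in> subtrees V E. v \<in> S}"
  define B where "B = {S \<in> subtrees V E. v \<notin> S}"
  have fin: "finite (subtrees V E)" using fV unfolding subtrees_def
    by (metis (no_types, lifting) Pow_iff finite_Pow_iff finite_subset mem_Collect_eq subsetI)
  have un: "subtrees V E = A \<union> B" and dis: "A \<inter> B = {}" unfolding A_def B_def by auto
  have split: "card (subtrees V E) = card A + card B"
    using card_Un_disjoint[of A B] fin un dis by (metis finite_Un)
  define f where "f S = (if S = {v} then {w} else S - {v})" for S
  have img: "f ` A \<subseteq> B - {{w'}}"
  proof
    fix T assume "T \<in> f ` A"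
    then obtain S where S: "S \<in> A" "T = f S" by blast
    show "T \<in> B - {{w'}}"
    proof (cases "S = {v}")
      case True
      then show ?thesis using S ww single unfolding f_def B_def by auto
    next
      case False
      have Ss: "S \<subseteq> V" "connected_set E S" "v \<in> S" using S unfolding A_def subtrees_def by auto
      then obtain x where x: "x \<in> S" "x \<noteq> v" using False by blast
      obtain y where y: "y \<in> S" "adj E v y" using nb[OF Ss(2) Ss(3) x] by blast
      have yu: "y = u" using uniq y u by blast
      have con: "connected_set E (S - {v})" unfolding connected_set_def
      proof (intro ballI)
        fix a b assume ab: "a \<in> S - {v}" "b \<in> S - {v}"
        then obtain p where p: "walk_in E S p" "hd p = a" "last p = b"
          using Ss(2) unfolding connected_set_def by blast
        have "hd p \<noteq> v" "last p \<noteq> v" using p ab by auto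
        then show "\<exists>p. walk_in E (S - {v}) p \<and> hd p = a \<and> last p = b"
          using walk_remove[OF uniq sym, where S=S and p=p] p by auto
      qed
      have uv: "u \<noteq> v" using neqv[OF u(2)] .
      have uS: "u \<in> S - {v}" using y(1) yu uv by simp
      have "u \<noteq> w'" using ww(2) by auto
      then have ne: "S - {v} \<noteq> {w'}" using uS by (metis singletonD)
      have "S - {v} \<subseteq> V" using Ss(1) by (rule subset_trans[OF Diff_subset])
      moreover have "S - {v} \<noteq> {}" using uS by (metis empty_iff)
      ultimately have "S - {v} \<in> B" using con unfolding B_def subtrees_def by simp
      then show ?thesis using S False ne unfolding f_def by auto
    qed
  qed
  have inj: "inj_on f A"
  proof
    fix S1 S2 assume a: "S1 \<in> A" "S2 \<in> A" "f S1 = f S2"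
    have memb: "\<And>S. S \<in> A \<Longrightarrow> S \<noteq> {v} \<Longrightarrow> u \<in> S - {v}"
    proof -
      fix S assume S: "S \<in> A" "S \<noteq> {v}"
      have Ss: "S \<subseteq> V" "connected_set E S" "v \<in> S" using S unfolding A_def subtrees_def by auto
      then obtain x where x: "x \<in> S" "x \<noteq> v" using S by blast
      obtain y where y: "y \<in> S" "adj E v y" using nb[OF Ss(2) Ss(3) x] by blast
      then show "u \<in> S - {v}" using uniq u neqv by blast
    qed
    have v12: "v \<in> S1" "v \<in> S2" using a unfolding A_def by auto
    have uw: "u \<noteq> w" using ww(1) by auto
    have mix: "\<And>S. S \<in> A \<Longrightarrow> S \<noteq> {v} \<Longrightarrow> S - {v} \<noteq> {w}"
    proof -
      fix S assume "S \<in> A" "S \<noteq> {v}"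
      then have "u \<in> S - {v}" by (rule memb)
      then show "S - {v} \<noteq> {w}" using uw by (metis singletonD)
    qed
    show "S1 = S2"
    proof (cases "S1 = {v}")
      case T1: True
      show ?thesis
      proof (cases "S2 = {v}")
        case True then show ?thesis using T1 by simp
      next
        case False
        have "f S2 = S2 - {v}" using False unfolding f_def by simp
        moreover have "f S1 = {w}" using T1 unfolding f_def by simp
        ultimately show ?thesis using a(3) mix[OF a(2) False] by simp
      qed
    next
      case F1: False
      show ?thesis
      proof (cases "S2 = {v}")
        case True
        have "f S2 = {w}" using True unfolding f_def by simp
        moreover have "f S1 = S1 - {v}" using F1 unfolding f_def by simp
        ultimately show ?thesis using a(3) mix[OF a(1) F1] by simp
      next
        case False
        then have "S1 - {v} = S2 - {v}" using a(3) F1 unfolding f_def by simp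
        then show ?thesis using v12 by (metis insert_Diff)
      qed
    qed
  qed
  have w'B: "{w'} \<in> B" using single ww unfolding B_def by auto
  have finB: "finite B" using fin unfolding B_def by simp
  have "card A \<le> card (B - {{w'}})" using card_inj_on_le[OF inj img] finB by simp
  also have "\<dots> < card B" using w'B finB by (metis card_Diff1_less)
  finally show ?thesis using split unfolding A_def by simp
qed

end
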